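(* Let $H$ be a real Hilbert space, $(T_n)_{n\in\mathbb{N}}$ a family of self-mappings of $H$ and $(\gamma_n)$ a sequence of positive reals. Then $(T_n)$ is jointly $(P_2)$ with respect to $(\gamma_n)$ if and only if $(T_n)$ is jointly firmly nonexpansive with respect to $(\gamma_n)$.
   Context: $(T_n)$ is jointly firmly nonexpansive w.r.t. $(\gamma_n)$ if for all $n,m\in\mathbb{N}$, $x,y\in H$, $\alpha,\beta\in[0,1]$ with $(1-\alpha)\gamma_n=(1-\beta)\gamma_m$: $\|T_nx-T_my\|\le\|((1-\alpha)x+\alpha T_nx)-((1-\beta)y+\beta T_my)\|$. $(T_n)$ is jointly $(P_2)$ w.r.t. $(\gamma_n)$ if for all $n,m$ and $x,y\in H$: $\frac1{\gamma_m}\big(\|T_nx-T_my\|^2+\|y-T_my\|^2-\|y-T_nx\|^2\big)\le\frac1{\gamma_n}\big(\|x-T_my\|^2-\|x-T_nx\|^2-\|T_nx-T_my\|^2\big)$. *)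

theory Defs
  imports "HOL-Analysis.Analysis"
begin

definition jointly_firmly_nonexpansive ::
  "(nat \<Rightarrow> 'a::{real_inner,complete_space} \<Rightarrow> 'a) \<Rightarrow> (nat \<Rightarrow> real) \<Rightarrow> bool" where
  "jointly_firmly_nonexpansive T \<gamma> \<longleftrightarrow>
    (\<forall>n m x y \<alpha> \<beta>. \<alpha> \<in> {0..1} \<longrightarrow> \<beta> \<in> {0..1} \<longrightarrow>
       (1 - \<alpha>) * \<gamma> n = (1 - \<beta>) * \<gamma> m \<longrightarrow>
       norm (T n x - T m y) \<le>
       norm (((1 - \<alpha>) *\<^sub>R x + \<alpha> *\<^sub>R T n x) - ((1 - \<beta>) *\<^sub>R y + \<beta> *\<^sub>R T m y)))"

definition jointly_P2 ::
  "(nat \<Rightarrow> 'a::{real_inner,complete_space} \<Rightarrow> 'a) \<Rightarrow> (nat \<Rightarrow> real) \<Rightarrow> bool" where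
  "jointly_P2 T \<gamma> \<longleftrightarrow>
    (\<forall>n m x y.
       (1 / \<gamma> m) * ((norm (T n x - T m y))\<^sup>2 + (norm (y - T m y))\<^sup>2 - (norm (y - T n x))\<^sup>2)
       \<le> (1 / \<gamma> n) * ((norm (x - T m y))\<^sup>2 - (norm (x - T n x))\<^sup>2 - (norm (T n x - T m y))\<^sup>2))"

end

theory Submission
  imports Defs
begin

lemma key:
  fixes d w :: "'a::real_inner"
  assumes c: "c > 0"
  shows "(\<forall>t\<in>{0..c}. norm d \<le> norm (d + t *\<^sub>R w)) \<longleftrightarrow> 0 \<le> inner d w"
proof
  assume h: "\<forall>t\<in>{0..c}. norm d \<le> norm (d + t *\<^sub>R w)"
  show "0 \<le> inner d w"
  proof (rule ccontr)
    assume neg: "\<not> 0 \<le> inner d w"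
    then have "w \<noteq> 0" by auto
    then have wp: "inner w w > 0" by simp
    define t where "t = min c (- inner d w / inner w w)"
    have "inner d w / inner w w < 0" using neg \<open>w \<noteq> 0\<close> by (simp add: divide_neg_pos)
    then have "- inner d w / inner w w > 0" by simp
    then have tp: "t > 0" using c by (auto simp: t_def)
    have "t \<le> (- inner d w) / inner w w" by (simp add: t_def)
    then have tl: "t * inner w w \<le> - inner d w" using wp
      by (metis pos_le_divide_eq)
    have "(norm (d + t *\<^sub>R w))\<^sup>2 = (norm d)\<^sup>2 + t * (2 * inner d w + t * inner w w)"
      by (simp add: power2_norm_eq_inner inner_add_left inner_add_right inner_commute algebra_simps)
    also have "t * (2 * inner d w + t * inner w w) < 0"
      using tp tl neg by (intro mult_pos_neg) auto
    finally have "(norm (d + t *\<^sub>R w))\<^sup>2 < (norm d)\<^sup>2" by simp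
    moreover have "norm d \<le> norm (d + t *\<^sub>R w)" using h tp by (auto simp: t_def)
    ultimately show False
      by (meson norm_ge_zero not_le power_mono)
  qed
next
  assume h: "0 \<le> inner d w"
  show "\<forall>t\<in>{0..c}. norm d \<le> norm (d + t *\<^sub>R w)"
  proof
    fix t assume t: "t \<in> {0..c}"
    have "(norm (d + t *\<^sub>R w))\<^sup>2 = (norm d)\<^sup>2 + (2 * t * inner d w + t * t * inner w w)"
      by (simp add: power2_norm_eq_inner inner_add_left inner_add_right inner_commute algebra_simps)
    moreover have "0 \<le> 2 * t * inner d w + t * t * inner w w"
      using t h by (intro add_nonneg_nonneg mult_nonneg_nonneg) auto
    ultimately have "(norm d)\<^sup>2 \<le> (norm (d + t *\<^sub>R w))\<^sup>2" by simp
    then show "norm d \<le> norm (d + t *\<^sub>R w)"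
      using power2_le_imp_le norm_ge_zero by blast
  qed
qed

lemma id1:
  fixes a b v :: "'a::real_inner"
  shows "(norm (a - b))\<^sup>2 + (norm (v - b))\<^sup>2 - (norm (v - a))\<^sup>2 = 2 * inner (v - b) (a - b)"
  by (simp add: power2_norm_eq_inner inner_diff_left inner_diff_right inner_commute algebra_simps)

lemma id2:
  fixes a b u :: "'a::real_inner"
  shows "(norm (u - b))\<^sup>2 - (norm (u - a))\<^sup>2 - (norm (a - b))\<^sup>2 = 2 * inner (u - a) (a - b)"
  by (simp add: power2_norm_eq_inner inner_diff_left inner_diff_right inner_commute algebra_simps)

lemma p2_pt:
  fixes a b u v :: "'a::real_inner"
  assumes gn: "gn > 0" and gm: "gm > 0"
  shows "((1 / gm) * ((norm (a - b))\<^sup>2 + (norm (v - b))\<^sup>2 - (norm (v - a))\<^sup>2)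
       \<le> (1 / gn) * ((norm (u - b))\<^sup>2 - (norm (u - a))\<^sup>2 - (norm (a - b))\<^sup>2))
     \<longleftrightarrow> 0 \<le> inner (a - b) ((1/gn) *\<^sub>R (u - a) - (1/gm) *\<^sub>R (v - b))"
proof -
  have i: "inner (a - b) ((1/gn) *\<^sub>R (u - a) - (1/gm) *\<^sub>R (v - b))
     = inner (u - a) (a - b) / gn - inner (v - b) (a - b) / gm"
    by (simp add: inner_diff_right inner_diff_left inner_commute)
  show ?thesis unfolding id1 id2 i using gn gm
    by (simp add: field_simps)
qed

lemma fne_pt:
  fixes a b u v :: "'a::real_inner"
  assumes gn: "gn > 0" and gm: "gm > 0"
  shows "(\<forall>\<alpha> \<beta>. \<alpha> \<in> {0..1} \<longrightarrow> \<beta> \<in> {0..1} \<longrightarrow>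
       (1 - \<alpha>) * gn = (1 - \<beta>) * gm \<longrightarrow>
       norm (a - b) \<le>
       norm (((1 - \<alpha>) *\<^sub>R u + \<alpha> *\<^sub>R a) - ((1 - \<beta>) *\<^sub>R v + \<beta> *\<^sub>R b)))
    \<longleftrightarrow> (\<forall>t\<in>{0..min gn gm}. norm (a - b) \<le> norm ((a - b) + t *\<^sub>R ((1/gn) *\<^sub>R (u - a) - (1/gm) *\<^sub>R (v - b))))"
proof -
  have eq: "((1 - \<alpha>) *\<^sub>R u + \<alpha> *\<^sub>R a) - ((1 - \<beta>) *\<^sub>R v + \<beta> *\<^sub>R b)
      = (a - b) + t *\<^sub>R ((1/gn) *\<^sub>R (u - a) - (1/gm) *\<^sub>R (v - b))"
    if "t = (1 - \<alpha>) * gn" "t = (1 - \<beta>) * gm" for \<alpha> \<beta> t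
  proof -
    have h1: "\<alpha> = 1 - t / gn" and h2: "\<beta> = 1 - t / gm" using that gn gm by (auto simp: field_simps)
    show ?thesis unfolding h1 h2 by (simp add: scaleR_diff_right scaleR_diff_left algebra_simps)
  qed
  show ?thesis
  proof
    assume h: "\<forall>\<alpha> \<beta>. \<alpha> \<in> {0..1} \<longrightarrow> \<beta> \<in> {0..1} \<longrightarrow>
       (1 - \<alpha>) * gn = (1 - \<beta>) * gm \<longrightarrow>
       norm (a - b) \<le>
       norm (((1 - \<alpha>) *\<^sub>R u + \<alpha> *\<^sub>R a) - ((1 - \<beta>) *\<^sub>R v + \<beta> *\<^sub>R b))"
    show "\<forall>t\<in>{0..min gn gm}. norm (a - b) \<le> norm ((a - b) + t *\<^sub>R ((1/gn) *\<^sub>R (u - a) - (1/gm) *\<^sub>R (v - b)))"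
    proof
      fix t assume t: "t \<in> {0..min gn gm}"
      define \<alpha> where "\<alpha> = 1 - t / gn"
      define \<beta> where "\<beta> = 1 - t / gm"
      have a1: "\<alpha> \<in> {0..1}" using t gn by (auto simp: \<alpha>_def)
      have b1: "\<beta> \<in> {0..1}" using t gm by (auto simp: \<beta>_def)
      have ta: "t = (1 - \<alpha>) * gn" using gn by (simp add: \<alpha>_def)
      have tb: "t = (1 - \<beta>) * gm" using gm by (simp add: \<beta>_def)
      show "norm (a - b) \<le> norm ((a - b) + t *\<^sub>R ((1/gn) *\<^sub>R (u - a) - (1/gm) *\<^sub>R (v - b)))"
        using h[rule_format, OF a1 b1] ta tb eq[OF ta tb] by simp
    qed
  next
    assume h: "\<forall>t\<in>{0..min gn gm}. norm (a - b) \<le> norm ((a - b) + t *\<^sub>R ((1/gn) *\<^sub>R (u - a) - (1/gm) *\<^sub>R (v - b)))"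
    show "\<forall>\<alpha> \<beta>. \<alpha> \<in> {0..1} \<longrightarrow> \<beta> \<in> {0..1} \<longrightarrow>
       (1 - \<alpha>) * gn = (1 - \<beta>) * gm \<longrightarrow>
       norm (a - b) \<le>
       norm (((1 - \<alpha>) *\<^sub>R u + \<alpha> *\<^sub>R a) - ((1 - \<beta>) *\<^sub>R v + \<beta> *\<^sub>R b))"
    proof (intro allI impI)
      fix \<alpha> \<beta> assume a1: "\<alpha> \<in> {0..1}" and b1: "\<beta> \<in> {0..1}" and e: "(1 - \<alpha>) * gn = (1 - \<beta>) * gm"
      define t where "t = (1 - \<alpha>) * gn"
      have "t \<ge> 0" using a1 gn by (auto simp: t_def)
      moreover have "t \<le> gn" using a1 gn by (auto simp: t_def mult_le_cancel_right1)
      moreover have "t \<le> gm" using b1 gm e by (auto simp: t_def mult_le_cancel_right1)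
      ultimately have "t \<in> {0..min gn gm}" by auto
      then show "norm (a - b) \<le> norm (((1 - \<alpha>) *\<^sub>R u + \<alpha> *\<^sub>R a) - ((1 - \<beta>) *\<^sub>R v + \<beta> *\<^sub>R b))"
        using h eq[of t \<alpha> \<beta>] e by (simp add: t_def)
    qed
  qed
qed

theorem proposition3p14:
  fixes T :: "nat \<Rightarrow> 'a::{real_inner,complete_space} \<Rightarrow> 'a"
    and \<gamma> :: "nat \<Rightarrow> real"
  assumes "\<And>n. \<gamma> n > 0"
  shows "jointly_P2 T \<gamma> \<longleftrightarrow> jointly_firmly_nonexpansive T \<gamma>"
proof -
  have "\<And>n m x y. ((1 / \<gamma> m) * ((norm (T n x - T m y))\<^sup>2 + (norm (y - T m y))\<^sup>2 - (norm (y - T n x))\<^sup>2)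
       \<le> (1 / \<gamma> n) * ((norm (x - T m y))\<^sup>2 - (norm (x - T n x))\<^sup>2 - (norm (T n x - T m y))\<^sup>2))
     \<longleftrightarrow> (\<forall>\<alpha> \<beta>. \<alpha> \<in> {0..1} \<longrightarrow> \<beta> \<in> {0..1} \<longrightarrow>
       (1 - \<alpha>) * \<gamma> n = (1 - \<beta>) * \<gamma> m \<longrightarrow>
       norm (T n x - T m y) \<le>
       norm (((1 - \<alpha>) *\<^sub>R x + \<alpha> *\<^sub>R T n x) - ((1 - \<beta>) *\<^sub>R y + \<beta> *\<^sub>R T m y)))"
  proof -
    fix n m x y
    have c: "min (\<gamma> n) (\<gamma> m) > 0" using assms by simp
    show "?thesis n m x y"
      unfolding p2_pt[OF assms assms] fne_pt[OF assms assms] key[OF c] ..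
  qed
  then show ?thesis
    unfolding jointly_P2_def jointly_firmly_nonexpansive_def by blast
qed

end
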